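(* Let $A$ be a linear endomorphism of $\mathbb{E}^n$, $\mathbf{b}$ an orthonormal basis, $u\in\mathbb{E}^n$ non-zero and $\hat u=u/\|u\|$. Then $$A^{\mathrm{sym}}(u)=\mathbf{A}^e(\hat u)\,u+\tfrac12\sum_{k<l}\big([A,R_{kl}](\hat u)\cdot\hat u\big)R_{kl}(u),\qquad A^{\mathrm{skew}}(u)=-\tfrac12\sum_{k<l}\big(\{A,R_{kl}\}(\hat u)\cdot\hat u\big)R_{kl}(u),$$ where $[X,Y]=XY-YX$ and $\{X,Y\}=XY+YX$.
   Context: $\mathbb{E}^n$ is $\mathbb{R}^n$ with the standard inner product; $A^*$ is the adjoint of $A$, $A^{\mathrm{sym}}=\frac12(A+A^* )$, $A^{\mathrm{skew}}=\frac12(A-A^* )$. For an orthonormal basis $\mathbf{b}=\{b_1,\dots,b_n\}$ and $1\le k<l\le n$, $R_{kl}$ is the linear map with $R_{kl}(b_k)=b_l$, $R_{kl}(b_l)=-b_k$, $R_{kl}(b_m)=0$ for $m\ne k,l$. The expansion form is $\mathbf{A}^e(u):=A(u)\cdot u$. *)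

theory Defs
  imports "HOL-Analysis.Analysis"
begin

definition sym_part :: "('a::euclidean_space \<Rightarrow> 'a) \<Rightarrow> 'a \<Rightarrow> 'a" where
  "sym_part A = (\<lambda>x. (1/2) *\<^sub>R (A x + adjoint A x))"

definition skew_part :: "('a::euclidean_space \<Rightarrow> 'a) \<Rightarrow> 'a \<Rightarrow> 'a" where
  "skew_part A = (\<lambda>x. (1/2) *\<^sub>R (A x - adjoint A x))"

definition orthonormal_basis :: "(nat \<Rightarrow> 'a::euclidean_space) \<Rightarrow> bool" where
  "orthonormal_basis b \<longleftrightarrow>
     (\<forall>i\<in>{1..DIM('a)}. \<forall>j\<in>{1..DIM('a)}. b i \<bullet> b j = (if i = j then 1 else 0))"

text \<open>The rotation generator R_kl: the linear map with b_k \<mapsto> b_l, b_l \<mapsto> -b_k,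
  b_m \<mapsto> 0 otherwise (written out explicitly).\<close>
definition Rgen :: "(nat \<Rightarrow> 'a::euclidean_space) \<Rightarrow> nat \<Rightarrow> nat \<Rightarrow> 'a \<Rightarrow> 'a" where
  "Rgen b k l = (\<lambda>x. (b k \<bullet> x) *\<^sub>R b l - (b l \<bullet> x) *\<^sub>R b k)"

definition commutator :: "('a::real_vector \<Rightarrow> 'a) \<Rightarrow> ('a \<Rightarrow> 'a) \<Rightarrow> 'a \<Rightarrow> 'a" where
  "commutator X Y = (\<lambda>x. X (Y x) - Y (X x))"

definition anticommutator :: "('a::real_vector \<Rightarrow> 'a) \<Rightarrow> ('a \<Rightarrow> 'a) \<Rightarrow> 'a \<Rightarrow> 'a" where
  "anticommutator X Y = (\<lambda>x. X (Y x) + Y (X x))"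

definition expansion_form :: "('a::real_inner \<Rightarrow> 'a) \<Rightarrow> 'a \<Rightarrow> real" where
  "expansion_form A u = A u \<bullet> u"

end

theory Submission
  imports Defs
begin

lemma onb_span:
  fixes b :: "nat \<Rightarrow> 'a::euclidean_space"
  assumes ob: "orthonormal_basis b"
  shows "span (b ` {1..DIM('a)}) = UNIV"
proof -
  let ?I = "{1..DIM('a)}"
  have bb: "\<And>i j. i \<in> ?I \<Longrightarrow> j \<in> ?I \<Longrightarrow> b i \<bullet> b j = (if i = j then 1 else 0)"
    using ob unfolding orthonormal_basis_def by blast
  have inj: "inj_on b ?I"
  proof (rule inj_onI)
    fix i j assume "i \<in> ?I" "j \<in> ?I" "b i = b j"
    then show "i = j" using bb[of i j] bb[of j j] by (auto split: if_splits)
  qed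
  have po: "pairwise orthogonal (b ` ?I)"
    unfolding pairwise_def orthogonal_def using bb by auto
  have nz: "0 \<notin> b ` ?I" using bb by force
  have ind: "independent (b ` ?I)" by (rule pairwise_orthogonal_independent[OF po nz])
  have "card (b ` ?I) = DIM('a)" using card_image[OF inj] by simp
  then have "UNIV \<subseteq> span (b ` ?I)"
    using card_ge_dim_independent[of "b ` ?I" UNIV] ind by simp
  then show ?thesis by auto
qed

lemma onb_expand:
  fixes b :: "nat \<Rightarrow> 'a::euclidean_space"
  assumes ob: "orthonormal_basis b"
  shows "(\<Sum>i=1..DIM('a). (b i \<bullet> x) *\<^sub>R b i) = x"
proof -
  let ?I = "{1..DIM('a)}"
  have bb: "\<And>i j. i \<in> ?I \<Longrightarrow> j \<in> ?I \<Longrightarrow> b i \<bullet> b j = (if i = j then 1 else 0)"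
    using ob unfolding orthonormal_basis_def by blast
  define d where "d = x - (\<Sum>i\<in>?I. (b i \<bullet> x) *\<^sub>R b i)"
  have "\<And>y. y \<in> b ` ?I \<Longrightarrow> orthogonal d y"
  proof -
    fix y assume "y \<in> b ` ?I"
    then obtain j where j: "j \<in> ?I" "y = b j" by auto
    have "(\<Sum>i\<in>?I. (b i \<bullet> x) *\<^sub>R b i) \<bullet> b j = (\<Sum>i\<in>?I. (b i \<bullet> x) * (b i \<bullet> b j))"
      by (simp add: inner_sum_left)
    also have "\<dots> = (\<Sum>i\<in>?I. if i = j then b j \<bullet> x else 0)"
    proof (rule sum.cong[OF refl])
      fix i assume hi: "i \<in> ?I" show "(b i \<bullet> x) * (b i \<bullet> b j) = (if i = j then b j \<bullet> x else 0)"
        using bb[OF hi j(1)] by simp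
    qed
    also have "\<dots> = b j \<bullet> x" using j by simp
    finally have e: "(\<Sum>i\<in>?I. (b i \<bullet> x) *\<^sub>R b i) \<bullet> b j = b j \<bullet> x" .
    have "d \<bullet> b j = x \<bullet> b j - (\<Sum>i\<in>?I. (b i \<bullet> x) *\<^sub>R b i) \<bullet> b j"
      unfolding d_def by (rule inner_diff_left)
    then show "orthogonal d y" unfolding orthogonal_def j(2) using e by (simp add: inner_commute)
  qed
  then have "orthogonal d d" using orthogonal_to_span[of d "b ` ?I" d] onb_span[OF ob] by auto
  then show ?thesis unfolding d_def orthogonal_def by simp
qed

lemma onb_inner:
  fixes b :: "nat \<Rightarrow> 'a::euclidean_space"
  assumes ob: "orthonormal_basis b"
  shows "(\<Sum>i=1..DIM('a). (b i \<bullet> x) * (b i \<bullet> y)) = x \<bullet> y"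
proof -
  have "x \<bullet> y = (\<Sum>i=1..DIM('a). (b i \<bullet> x) *\<^sub>R b i) \<bullet> y" using onb_expand[OF ob] by simp
  then show ?thesis by (simp add: inner_sum_left)
qed

lemma pair_sum_half:
  fixes f :: "nat \<Rightarrow> nat \<Rightarrow> 'b::real_vector"
  assumes sym: "\<And>k l. f k l = f l k" and diag: "\<And>k. f k k = 0"
  shows "(\<Sum>k=1..n. \<Sum>l=k+1..n. f k l) = (1/2) *\<^sub>R (\<Sum>k=1..n. \<Sum>l=1..n. f k l)"
proof -
  have "(\<Sum>k=1..n. \<Sum>l=1..n. f k l) = (\<Sum>k=1..n. \<Sum>l=k+1..n. f k l) + (\<Sum>k=1..n. \<Sum>l=k+1..n. f k l)"
  proof (induction n)
    case 0 then show ?case by simp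
  next
    case (Suc n)
    have a: "(\<Sum>l=1..Suc n. f k l) = (\<Sum>l=1..n. f k l) + f k (Suc n)" for k by simp
    have b: "(\<Sum>l=k+1..Suc n. f k l) = (\<Sum>l=k+1..n. f k l) + f k (Suc n)" if "k \<le> n" for k
      using that by simp
    have c: "(\<Sum>k=1..n. \<Sum>l=k+1..Suc n. f k l) = (\<Sum>k=1..n. \<Sum>l=k+1..n. f k l) + (\<Sum>k=1..n. f k (Suc n))"
      by (simp add: b sum.distrib)
    have d: "(\<Sum>l=1..n. f (Suc n) l) = (\<Sum>k=1..n. f k (Suc n))" using sym by simp
    show ?case using Suc.IH d
      by (simp add: a sum.distrib c d Suc diag algebra_simps)
  qed
  then show ?thesis by (simp add: scaleR_2[symmetric])
qed


lemma dbl1: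
  fixes b :: "nat \<Rightarrow> 'a::euclidean_space"
  assumes ob: "orthonormal_basis b"
  shows "(\<Sum>k=1..DIM('a). \<Sum>l=1..DIM('a). ((b k \<bullet> p) * (b k \<bullet> q) * (b l \<bullet> r)) *\<^sub>R b l) = (p \<bullet> q) *\<^sub>R r"
proof -
  have "(\<Sum>k=1..DIM('a). \<Sum>l=1..DIM('a). ((b k \<bullet> p) * (b k \<bullet> q) * (b l \<bullet> r)) *\<^sub>R b l)
     = (\<Sum>k=1..DIM('a). ((b k \<bullet> p) * (b k \<bullet> q)) *\<^sub>R (\<Sum>l=1..DIM('a). (b l \<bullet> r) *\<^sub>R b l))"
    by (simp add: scaleR_sum_right)
  also have "\<dots> = (\<Sum>k=1..DIM('a). ((b k \<bullet> p) * (b k \<bullet> q)) *\<^sub>R r)" using onb_expand[OF ob] by simp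
  also have "\<dots> = (p \<bullet> q) *\<^sub>R r" using onb_inner[OF ob, of p q] by (simp add: scaleR_sum_left[symmetric])
  finally show ?thesis .
qed

lemma dbl2:
  fixes b :: "nat \<Rightarrow> 'a::euclidean_space"
  assumes ob: "orthonormal_basis b"
  shows "(\<Sum>k=1..DIM('a). \<Sum>l=1..DIM('a). ((b l \<bullet> p) * (b l \<bullet> q) * (b k \<bullet> r)) *\<^sub>R b k) = (p \<bullet> q) *\<^sub>R r"
  by (subst sum.swap) (rule dbl1[OF ob])

lemma sw: "(s - t) *\<^sub>R (v - v') = (t - s) *\<^sub>R (v' - (v::'a::real_vector))"
  by (simp add: algebra_simps)

lemma ex4: "(a*b - c*d) *\<^sub>R (p *\<^sub>R X - q *\<^sub>R Y) = (a*p*b) *\<^sub>R X - (q*b*a) *\<^sub>R Y - (p*d*c) *\<^sub>R X + (c*q*(d::real)) *\<^sub>R (Y::'a::real_vector)"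
  by (simp add: algebra_simps)

lemma g2: "p *\<^sub>R w - q *\<^sub>R e - q *\<^sub>R e + p *\<^sub>R w = (2 * p) *\<^sub>R w - (2 * q) *\<^sub>R (e::'a::real_vector)"
  by (simp only: mult_2 scaleR_left_distrib) (simp add: algebra_simps)

lemma key:
  fixes b :: "nat \<Rightarrow> 'a::euclidean_space"
  assumes ob: "orthonormal_basis b"
  shows "(\<Sum>k=1..DIM('a). \<Sum>l=k+1..DIM('a). (Rgen b k l e \<bullet> w) *\<^sub>R Rgen b k l y)
        = (e \<bullet> y) *\<^sub>R w - (w \<bullet> y) *\<^sub>R e"
proof -
  let ?n = "DIM('a)"
  define f where "f k l = (Rgen b k l e \<bullet> w) *\<^sub>R Rgen b k l y" for k l
  have sy: "f k l = f l k" for k l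
    unfolding f_def Rgen_def inner_diff_left inner_scaleR_left by (rule sw)
  have dg: "f k k = 0" for k unfolding f_def Rgen_def by simp
  have fe: "f k l = ((b k \<bullet> e) * (b k \<bullet> y) * (b l \<bullet> w)) *\<^sub>R b l
      - ((b l \<bullet> y) * (b l \<bullet> w) * (b k \<bullet> e)) *\<^sub>R b k
      - ((b k \<bullet> y) * (b k \<bullet> w) * (b l \<bullet> e)) *\<^sub>R b l
      + ((b l \<bullet> e) * (b l \<bullet> y) * (b k \<bullet> w)) *\<^sub>R b k" for k l
    unfolding f_def Rgen_def inner_diff_left inner_scaleR_left by (rule ex4)
  have full: "(\<Sum>k=1..?n. \<Sum>l=1..?n. f k l) = 2 *\<^sub>R ((e \<bullet> y) *\<^sub>R w - (w \<bullet> y) *\<^sub>R e)"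
    unfolding fe sum_subtractf sum.distrib dbl1[OF ob] dbl2[OF ob]
    by (simp add: inner_commute[of w y] scaleR_2 scaleR_right_diff_distrib g2)
  show ?thesis
    using pair_sum_half[of f ?n, OF sy dg] full unfolding f_def by simp
qed


lemma Rgen_skew: "Rgen b k l x \<bullet> y = - (Rgen b k l y \<bullet> x)"
  unfolding Rgen_def by (simp add: inner_diff_left algebra_simps)

theorem corollary2p12:
  fixes A :: "'a::euclidean_space \<Rightarrow> 'a" and b :: "nat \<Rightarrow> 'a" and u :: 'a
  assumes "linear A"
    and "orthonormal_basis b"
    and "u \<noteq> 0"
  defines "uh \<equiv> (1 / norm u) *\<^sub>R u"
  shows "(sym_part A u =
           expansion_form A uh *\<^sub>R u
         + (1/2) *\<^sub>R (\<Sum>k=1..DIM('a). \<Sum>l=k+1..DIM('a).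
              (commutator A (Rgen b k l) uh \<bullet> uh) *\<^sub>R Rgen b k l u)) \<and>
         (skew_part A u =
           - (1/2) *\<^sub>R (\<Sum>k=1..DIM('a). \<Sum>l=k+1..DIM('a).
              (anticommutator A (Rgen b k l) uh \<bullet> uh) *\<^sub>R Rgen b k l u))"
proof -
  let ?e = uh
  define n where "n = norm u"
  have n0: "n > 0" using assms(3) unfolding n_def by simp
  have ue: "u = n *\<^sub>R ?e" unfolding uh_def n_def using n0 n_def by simp
  have ee: "?e \<bullet> ?e = 1" unfolding uh_def using assms(3)
    by (simp add: power2_norm_eq_inner[symmetric] power2_eq_square)
  have eu: "?e \<bullet> u = n" using ee ue by simp
  have la: "linear (adjoint A)" using adjoint_linear[OF assms(1)] .
  have adj: "x \<bullet> adjoint A y = A x \<bullet> y" for x y using adjoint_works[OF assms(1)] .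
  define w where "w = A ?e + adjoint A ?e"
  define w' where "w' = adjoint A ?e - A ?e"
  have h1: "A (Rgen b k l ?e) \<bullet> ?e = Rgen b k l ?e \<bullet> adjoint A ?e" for k l
    using adj[of "Rgen b k l ?e" ?e] by simp
  have h2: "Rgen b k l (A ?e) \<bullet> ?e = - (Rgen b k l ?e \<bullet> A ?e)" for k l
    by (rule Rgen_skew)
  have c1: "commutator A (Rgen b k l) ?e \<bullet> ?e = Rgen b k l ?e \<bullet> w" for k l
    unfolding commutator_def w_def inner_diff_left inner_add_right h1 h2 by simp
  have c2: "anticommutator A (Rgen b k l) ?e \<bullet> ?e = Rgen b k l ?e \<bullet> w'" for k l
    unfolding anticommutator_def w'_def inner_add_left inner_diff_right h1 h2 by simp
  have we: "w \<bullet> ?e = 2 * (A ?e \<bullet> ?e)"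
    unfolding w_def inner_add_left using adj[of ?e ?e] by (simp add: inner_commute)
  have we': "w' \<bullet> ?e = 0"
    unfolding w'_def inner_diff_left using adj[of ?e ?e] by (simp add: inner_commute)
  have we2: "?e \<bullet> w = 2 * (A ?e \<bullet> ?e)" using we by (simp only: inner_commute)
  have we2': "?e \<bullet> w' = 0" using we' by (simp only: inner_commute)
  have Au: "A u = n *\<^sub>R A ?e" using ue linear_scale[OF assms(1)] by metis
  have Au': "adjoint A u = n *\<^sub>R adjoint A ?e" using ue linear_scale[OF la] by metis
  have S1: "(\<Sum>k=1..DIM('a). \<Sum>l=k+1..DIM('a). (commutator A (Rgen b k l) uh \<bullet> uh) *\<^sub>R Rgen b k l u)
     = n *\<^sub>R w - (n * (2 * (A ?e \<bullet> ?e))) *\<^sub>R ?e"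
    unfolding c1 key[OF assms(2)] eu
    by (simp add: ue we we2)
  have S2: "(\<Sum>k=1..DIM('a). \<Sum>l=k+1..DIM('a). (anticommutator A (Rgen b k l) uh \<bullet> uh) *\<^sub>R Rgen b k l u)
     = n *\<^sub>R w'"
    unfolding c2 key[OF assms(2)] eu
    by (simp add: ue we' we2')
  show ?thesis
  proof
    show "sym_part A u = expansion_form A uh *\<^sub>R u
         + (1/2) *\<^sub>R (\<Sum>k=1..DIM('a). \<Sum>l=k+1..DIM('a).
              (commutator A (Rgen b k l) uh \<bullet> uh) *\<^sub>R Rgen b k l u)"
      unfolding S1 sym_part_def expansion_form_def Au Au' w_def
      by (simp add: ue algebra_simps)
    show "skew_part A u = - (1/2) *\<^sub>R (\<Sum>k=1..DIM('a). \<Sum>l=k+1..DIM('a).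
              (anticommutator A (Rgen b k l) uh \<bullet> uh) *\<^sub>R Rgen b k l u)"
      unfolding S2 skew_part_def Au Au' w'_def
      by (simp add: algebra_simps)
  qed
qed

end
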